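(* Let $s\ge1$, $p\in F_{2,2s}$, and $\alpha,\beta,\gamma,\delta\in\mathbb R$ with $\alpha\delta-\beta\gamma\ne0$. Let $q(x,y)=p(\alpha x+\beta y,\gamma x+\delta y)$. Then $S(H_q)=S(H_p)$.
   Context: $F_{2,2s}$ is the space of real binary forms of degree $2s$ in $x,y$. For $p(x,y)=\sum_{j=0}^{2s}\binom{2s}{j}a_jx^{2s-j}y^j\in F_{2,2s}$, the catalecticant of $p$ is the real quadratic form in $s+1$ variables $H_p(t_0,\dots,t_s)=\sum_{i=0}^s\sum_{j=0}^s a_{i+j}t_it_j$ (Hankel matrix $(a_{i+j})_{0\le i,j\le s}$). For a real quadratic form $H$, $S(H)$ denotes its signature: the pair (number of positive eigenvalues, number of negative eigenvalues) of its symmetric matrix. *)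

theory Defs
  imports Complex_Main "HOL-Computational_Algebra.Polynomial" "Jordan_Normal_Form.Char_Poly"
begin

definition binform :: "nat \<Rightarrow> (nat \<Rightarrow> real) \<Rightarrow> real \<Rightarrow> real \<Rightarrow> real" where
  "binform s a x y = (\<Sum>j=0..2*s. real (2*s choose j) * a j * x ^ (2*s - j) * y ^ j)"

definition catalecticant :: "nat \<Rightarrow> (nat \<Rightarrow> real) \<Rightarrow> real mat" where
  "catalecticant s a = mat (s+1) (s+1) (\<lambda>(i,j). a (i+j))"

definition num_pos_eig :: "real mat \<Rightarrow> nat" where
  "num_pos_eig A = (\<Sum>r\<in>{r. r > 0 \<and> poly (char_poly A) r = 0}. order r (char_poly A))"

definition num_neg_eig :: "real mat \<Rightarrow> nat" where
  "num_neg_eig A = (\<Sum>r\<in>{r. r < 0 \<and> poly (char_poly A) r = 0}. order r (char_poly A))"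

definition signature :: "real mat \<Rightarrow> nat \<times> nat" where
  "signature A = (num_pos_eig A, num_neg_eig A)"

end

theory Submission
  imports Defs
begin


lemma real_sym_eig:
  fixes A :: "real mat"
  assumes A: "A \<in> carrier_mat n n" and sym: "\<And>i j. i < n \<Longrightarrow> j < n \<Longrightarrow> A $$ (i,j) = A $$ (j,i)"
    and n: "n > 0"
  shows "\<exists>e. eigenvalue A e"
proof -
  let ?Ac = "map_mat complex_of_real A"
  have Ac: "?Ac \<in> carrier_mat n n" using A by simp
  have cp: "char_poly ?Ac = map_poly complex_of_real (char_poly A)"
    using of_real_hom.char_poly_hom[OF A] by simp
  have "degree (char_poly ?Ac) = n" using degree_monic_char_poly[OF Ac] by simp
  then have "\<not> constant (poly (char_poly ?Ac))" using n constant_degree[of "char_poly ?Ac"] by auto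
  then obtain z where z: "poly (char_poly ?Ac) z = 0" using fundamental_theorem_of_algebra by blast
  then have "eigenvalue ?Ac z" using eigenvalue_root_char_poly[OF Ac] by simp
  then obtain v where ev: "eigenvector ?Ac v z" unfolding eigenvalue_def by blast
  then have v: "v \<in> carrier_vec n" "v \<noteq> 0\<^sub>v n" "?Ac *\<^sub>v v = z \<cdot>\<^sub>v v"
    unfolding eigenvector_def using Ac by auto
  have comp: "(\<Sum>j<n. complex_of_real (A$$(i,j)) * v$j) = z * v$i" if i: "i<n" for i
  proof -
    have "(?Ac *\<^sub>v v) $ i = z * v $ i" using v(3) v(1) i by simp
    moreover have "(?Ac *\<^sub>v v) $ i = (\<Sum>j<n. complex_of_real (A$$(i,j)) * v$j)"
      using i A v(1) by (simp add: scalar_prod_def atLeast0LessThan)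
    ultimately show ?thesis by simp
  qed
  define S where "S = (\<Sum>i<n. cnj (v$i) * (\<Sum>j<n. complex_of_real (A$$(i,j)) * v$j))"
  define N where "N = (\<Sum>i<n. (cmod (v$i))^2)"
  have cm: "\<And>x. complex_of_real ((cmod x)^2) = x * cnj x" by (rule complex_norm_square)
  have "S = (\<Sum>i<n. z * complex_of_real ((cmod (v$i))^2))"
    unfolding S_def
  proof (rule sum.cong[OF refl])
    fix i assume "i \<in> {..<n}"
    then have "cnj (v$i) * (\<Sum>j<n. complex_of_real (A$$(i,j)) * v$j) = cnj (v$i) * (z * v$i)"
      using comp[of i] by simp
    also have "\<dots> = z * (v$i * cnj (v$i))" by (simp only: mult_ac)
    also have "\<dots> = z * complex_of_real ((cmod (v$i))^2)" by (simp only: cm)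
    finally show "cnj (v$i) * (\<Sum>j<n. complex_of_real (A$$(i,j)) * v$j) = z * complex_of_real ((cmod (v$i))^2)" .
  qed
  also have "\<dots> = z * complex_of_real N"
    by (simp add: N_def sum_distrib_left)
  finally have S1: "S = z * complex_of_real N" .
  have "cnj S = (\<Sum>i<n. \<Sum>j<n. cnj (v$j) * complex_of_real (A$$(i,j)) * v$i)"
    unfolding S_def by (simp add: sum_distrib_left mult_ac)
  also have "\<dots> = (\<Sum>i<n. \<Sum>j<n. cnj (v$j) * complex_of_real (A$$(j,i)) * v$i)"
    by (intro sum.cong refl) (simp add: sym)
  also have "\<dots> = (\<Sum>j<n. \<Sum>i<n. cnj (v$j) * complex_of_real (A$$(j,i)) * v$i)"
    by (rule sum.swap)
  also have "\<dots> = S" unfolding S_def by (simp add: sum_distrib_left mult_ac)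
  finally have S2: "cnj S = S" .
  obtain i where i: "i < n" "v $ i \<noteq> 0"
  proof (rule ccontr)
    assume "\<not> thesis"
    then have "\<forall>i<n. v $ i = 0" using that by blast
    then have "v = 0\<^sub>v n" using v(1) by (intro eq_vecI) auto
    then show False using v(2) by simp
  qed
  have Npos: "N > 0" unfolding N_def
    by (rule sum_pos2[of _ i]) (use i in auto)
  have "cnj z * complex_of_real N = z * complex_of_real N"
    using S1 S2 by (metis complex_cnj_complex_of_real complex_cnj_mult)
  then have "cnj z = z" using Npos by simp
  then have "Im (cnj z) = Im z" by simp
  then have "Im z = 0" by simp
  then have zr: "z = complex_of_real (Re z)" by (simp add: complex_eq_iff)
  have "complex_of_real (poly (char_poly A) (Re z)) = poly (char_poly ?Ac) (complex_of_real (Re z))"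
    by (simp add: cp of_real_hom.poly_map_poly)
  also have "\<dots> = 0" using z zr by simp
  finally have "poly (char_poly A) (Re z) = 0" by simp
  then show ?thesis using eigenvalue_root_char_poly[OF A] by blast
qed


lemma mat_unit:
  fixes M :: "real mat"
  assumes "M \<in> carrier_mat n m" "j < m" "i < n"
  shows "(M *\<^sub>v unit_vec m j) $ i = M $$ (i,j)"
  using assms by (simp add: index_mult_mat_vec)

definition hh :: "nat \<Rightarrow> real vec \<Rightarrow> real mat" where
  "hh n w = mat n n (\<lambda>(i,j). (if i = j then 1 else 0) - (2 / (w \<bullet> w)) * (w$i * w$j))"

lemma hh_carrier[simp]: "hh n w \<in> carrier_mat n n" by (simp add: hh_def)
lemma hh_dims[simp]: "dim_row (hh n w) = n" "dim_col (hh n w) = n" by (simp_all add: hh_def)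

lemma hh_comp:
  assumes w: "w \<in> carrier_vec n" and x: "x \<in> carrier_vec n" and i: "i < n"
  shows "(hh n w *\<^sub>v x) $ i = x $ i - (2 / (w \<bullet> w)) * (w \<bullet> x) * w $ i"
proof -
  have "(hh n w *\<^sub>v x) $ i = (\<Sum>j\<in>{0..<n}. ((if i = j then 1 else 0) - (2 / (w \<bullet> w)) * (w$i * w$j)) * x$j)"
    using i x by (simp add: hh_def scalar_prod_def)
  also have "\<dots> = (\<Sum>j\<in>{0..<n}. (if i = j then x$j else 0) - ((2 / (w \<bullet> w)) * w$i) * (w$j * x$j))"
    by (intro sum.cong refl) (auto simp: algebra_simps)
  also have "\<dots> = (\<Sum>j\<in>{0..<n}. (if i = j then x$j else 0)) - ((2 / (w \<bullet> w)) * w$i) * (\<Sum>j\<in>{0..<n}. w$j * x$j)"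
    by (simp add: sum_subtractf sum_distrib_left)
  also have "\<dots> = x $ i - (2 / (w \<bullet> w)) * (w \<bullet> x) * w $ i"
    using i x by (simp add: scalar_prod_def)
  finally show ?thesis .
qed

lemma hh_dim[simp]: "dim_vec (hh n w *\<^sub>v x) = n" by (simp add: hh_def)

lemma hh_fix:
  assumes w: "w \<in> carrier_vec n" and x: "x \<in> carrier_vec n" and o: "w \<bullet> x = 0"
  shows "hh n w *\<^sub>v x = x"
proof (rule eq_vecI)
  fix i assume "i < dim_vec x"
  then have i: "i < n" using x by simp
  show "(hh n w *\<^sub>v x) $ i = x $ i" using hh_comp[OF w x i] o by simp
qed (use x in simp)

lemma hh_sdot:
  assumes w: "w \<in> carrier_vec n" and x: "x \<in> carrier_vec n"
  shows "w \<bullet> (hh n w *\<^sub>v x) = (w \<bullet> x) - (2 / (w \<bullet> w)) * (w \<bullet> x) * (w \<bullet> w)"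
proof -
  have "hh n w *\<^sub>v x = x - ((2 / (w \<bullet> w)) * (w \<bullet> x)) \<cdot>\<^sub>v w"
  proof (rule eq_vecI)
    fix i assume "i < dim_vec (x - ((2 / (w \<bullet> w)) * (w \<bullet> x)) \<cdot>\<^sub>v w)"
    then have i: "i < n" using x w by simp
    show "(hh n w *\<^sub>v x) $ i = (x - ((2 / (w \<bullet> w)) * (w \<bullet> x)) \<cdot>\<^sub>v w) $ i"
      using hh_comp[OF w x i] i x w by simp
  qed (use x w in simp)
  then have "w \<bullet> (hh n w *\<^sub>v x) = w \<bullet> (x - ((2 / (w \<bullet> w)) * (w \<bullet> x)) \<cdot>\<^sub>v w)" by (rule arg_cong)
  also have "\<dots> = w \<bullet> x - w \<bullet> (((2 / (w \<bullet> w)) * (w \<bullet> x)) \<cdot>\<^sub>v w)"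
    by (rule scalar_prod_minus_distrib[OF w x]) (use w in simp)
  also have "w \<bullet> (((2 / (w \<bullet> w)) * (w \<bullet> x)) \<cdot>\<^sub>v w) = ((2 / (w \<bullet> w)) * (w \<bullet> x)) * (w \<bullet> w)"
    by (rule scalar_prod_smult_distrib[OF w w])
  finally show ?thesis .
qed

lemma arith1: "(p - t * a * q) - t * (- a) * q = (p::real)"
  by (simp add: algebra_simps)

lemma div_help:
  fixes d x c :: real
  assumes "d \<noteq> 0" "2 * x = c * d"
  shows "2 / d * x = c"
proof -
  have "2 / d * x = (2 * x) / d" by simp
  also have "\<dots> = c * d / d" using assms(2) by simp
  also have "\<dots> = c" using assms(1) by simp
  finally show ?thesis .
qed

lemma hh_invol_vec:
  assumes w: "w \<in> carrier_vec n" and x: "x \<in> carrier_vec n"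
  shows "hh n w *\<^sub>v (hh n w *\<^sub>v x) = x"
proof (rule eq_vecI)
  fix i assume "i < dim_vec x"
  then have i: "i < n" using x by simp
  have hx: "hh n w *\<^sub>v x \<in> carrier_vec n" by (rule mult_mat_vec_carrier[OF hh_carrier x])
  show "(hh n w *\<^sub>v (hh n w *\<^sub>v x)) $ i = x $ i"
  proof (cases "w \<bullet> w = 0")
    case True
    then have t0: "2 / (w \<bullet> w) = 0" by simp
    show ?thesis by (simp only: hh_comp[OF w hx i] hh_comp[OF w x i] t0 mult_zero_left diff_zero)
  next
    case False
    have tc: "2 / (w \<bullet> w) * (w \<bullet> w) = 2" using False by simp
    have "2 / (w \<bullet> w) * (w \<bullet> x) * (w \<bullet> w) = (2 / (w \<bullet> w) * (w \<bullet> w)) * (w \<bullet> x)"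
      by (simp only: ac_simps)
    also have "\<dots> = 2 * (w \<bullet> x)" by (simp only: tc)
    finally have e1: "2 / (w \<bullet> w) * (w \<bullet> x) * (w \<bullet> w) = 2 * (w \<bullet> x)" .
    have "w \<bullet> (hh n w *\<^sub>v x) = (w \<bullet> x) - 2 / (w \<bullet> w) * (w \<bullet> x) * (w \<bullet> w)" by (rule hh_sdot[OF w x])
    also have "\<dots> = (w \<bullet> x) - 2 * (w \<bullet> x)" by (simp only: e1)
    also have "\<dots> = - (w \<bullet> x)" by simp
    finally have sd: "w \<bullet> (hh n w *\<^sub>v x) = - (w \<bullet> x)" .
    have "(hh n w *\<^sub>v (hh n w *\<^sub>v x)) $ i = (hh n w *\<^sub>v x) $ i - (2 / (w \<bullet> w)) * (w \<bullet> (hh n w *\<^sub>v x)) * w $ i"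
      by (rule hh_comp[OF w hx i])
    also have "\<dots> = (x $ i - (2 / (w \<bullet> w)) * (w \<bullet> x) * w $ i) - (2 / (w \<bullet> w)) * (- (w \<bullet> x)) * w $ i"
      by (simp only: hh_comp[OF w x i] sd)
    also have "\<dots> = x $ i" by (rule arith1)
    finally show ?thesis .
  qed
qed (use x in simp)

lemma hh_invol:
  assumes w: "w \<in> carrier_vec n"
  shows "hh n w * hh n w = 1\<^sub>m n"
proof (rule eq_matI)
  fix i j assume "i < dim_row (1\<^sub>m n :: real mat)" "j < dim_col (1\<^sub>m n :: real mat)"
  then have i: "i < n" and j: "j < n" by auto
  have "(hh n w * hh n w) $$ (i,j) = ((hh n w * hh n w) *\<^sub>v unit_vec n j) $ i"
    using i j by (subst mat_unit[of _ n n]) auto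
  also have "\<dots> = (hh n w *\<^sub>v (hh n w *\<^sub>v unit_vec n j)) $ i"
    by (subst assoc_mult_mat_vec[of _ n n _ n]) auto
  also have "\<dots> = unit_vec n j $ i" using hh_invol_vec[OF w, of "unit_vec n j"] by simp
  finally show "(hh n w * hh n w) $$ (i,j) = 1\<^sub>m n $$ (i,j)" using i j by simp
qed auto

lemma hh_symm: "transpose_mat (hh n w) = hh n w"
  by (rule eq_matI) (auto simp: hh_def mult.commute)

definition offdiag0 :: "nat \<Rightarrow> nat \<Rightarrow> real mat \<Rightarrow> bool" where
  "offdiag0 n k B \<longleftrightarrow> (\<forall>i<n. \<forall>j<n. i \<noteq> j \<and> (i < k \<or> j < k) \<longrightarrow> B$$(i,j) = 0)"

definition orth :: "nat \<Rightarrow> real mat \<Rightarrow> bool" where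
  "orth n U \<longleftrightarrow> U \<in> carrier_mat n n \<and> transpose_mat U * U = 1\<^sub>m n \<and> U * transpose_mat U = 1\<^sub>m n"

lemma sym_congr:
  fixes A M :: "real mat"
  assumes A: "A \<in> carrier_mat n n" "transpose_mat A = A" and M: "M \<in> carrier_mat n n"
  shows "transpose_mat (transpose_mat M * A * M) = transpose_mat M * A * M"
proof -
  have "transpose_mat (transpose_mat M * A * M) = transpose_mat M * transpose_mat (transpose_mat M * A)"
    by (rule transpose_mult[of _ n n _ n]) (use A M in auto)
  also have "transpose_mat (transpose_mat M * A) = transpose_mat A * transpose_mat (transpose_mat M)"
    by (rule transpose_mult[of _ n n _ n]) (use A M in auto)
  also have "\<dots> = A * M" using A by simp
  also have "transpose_mat M * (A * M) = transpose_mat M * A * M"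
    by (rule assoc_mult_mat[symmetric, of _ n n _ n _ n]) (use A M in auto)
  finally show ?thesis .
qed

lemma sym_entry:
  fixes B :: "real mat"
  assumes "B \<in> carrier_mat n n" "transpose_mat B = B" "i < n" "j < n"
  shows "B $$ (i,j) = B $$ (j,i)"
proof -
  have "B $$ (j,i) = transpose_mat B $$ (i,j)" using assms(1,3,4) by simp
  also have "\<dots> = B $$ (i,j)" using assms(2) by simp
  finally show ?thesis by simp
qed

lemma vec_nz_entry:
  fixes v :: "real vec"
  assumes "v \<in> carrier_vec n" "v \<noteq> 0\<^sub>v n"
  obtains i where "i < n" "v $ i \<noteq> 0"
proof (rule ccontr)
  assume "\<not> thesis"
  then have "\<forall>i<n. v $ i = 0" using that by blast
  then have "v = 0\<^sub>v n" using assms(1) by (intro eq_vecI) auto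
  then show False using assms(2) by simp
qed

lemma self_dot: "v \<in> carrier_vec n \<Longrightarrow> (v :: real vec) \<bullet> v = (\<Sum>i\<in>{0..<n}. (v $ i)^2)"
  by (simp add: scalar_prod_def power2_eq_square)

lemma mat_eq_vec:
  fixes M N :: "real mat"
  assumes M: "M \<in> carrier_mat n n" and N: "N \<in> carrier_mat n n"
    and eq: "\<And>x. x \<in> carrier_vec n \<Longrightarrow> M *\<^sub>v x = N *\<^sub>v x"
  shows "M = N"
proof (rule eq_matI)
  fix i j assume "i < dim_row N" "j < dim_col N"
  then have ij: "i < n" "j < n" using N by auto
  have "M $$ (i,j) = (M *\<^sub>v unit_vec n j) $ i" using mat_unit[OF M ij(2) ij(1)] by simp
  also have "\<dots> = (N *\<^sub>v unit_vec n j) $ i" using eq[of "unit_vec n j"] by simp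
  also have "\<dots> = N $$ (i,j)" using mat_unit[OF N ij(2) ij(1)] by simp
  finally show "M $$ (i,j) = N $$ (i,j)" .
qed (use M N in auto)

lemma mv2:
  fixes X Y :: "real mat"
  assumes "X \<in> carrier_mat n n" "Y \<in> carrier_mat n n" "x \<in> carrier_vec n"
  shows "(X * Y) *\<^sub>v x = X *\<^sub>v (Y *\<^sub>v x)"
  by (rule assoc_mult_mat_vec[of X n n Y n x]) (use assms in auto)

lemma mv3:
  fixes X Y Z :: "real mat"
  assumes X: "X \<in> carrier_mat n n" and Y: "Y \<in> carrier_mat n n" and Z: "Z \<in> carrier_mat n n"
    and x: "x \<in> carrier_vec n"
  shows "(X * Y * Z) *\<^sub>v x = X *\<^sub>v (Y *\<^sub>v (Z *\<^sub>v x))"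
proof -
  have XY: "X * Y \<in> carrier_mat n n" using X Y by simp
  have Zx: "Z *\<^sub>v x \<in> carrier_vec n" using Z x by simp
  have "(X * Y * Z) *\<^sub>v x = (X * Y) *\<^sub>v (Z *\<^sub>v x)" by (rule mv2[OF XY Z x])
  also have "\<dots> = X *\<^sub>v (Y *\<^sub>v (Z *\<^sub>v x))" by (rule mv2[OF X Y Zx])
  finally show ?thesis .
qed

lemma orth_vec:
  assumes U: "orth n U" and x: "x \<in> carrier_vec n"
  shows "transpose_mat U *\<^sub>v (U *\<^sub>v x) = x" "U *\<^sub>v (transpose_mat U *\<^sub>v x) = x"
proof -
  have Uc: "U \<in> carrier_mat n n" and Ut: "transpose_mat U \<in> carrier_mat n n" using U unfolding orth_def by auto
  have "transpose_mat U *\<^sub>v (U *\<^sub>v x) = (transpose_mat U * U) *\<^sub>v x" by (rule mv2[OF Ut Uc x, symmetric])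
  also have "\<dots> = x" using U x unfolding orth_def by simp
  finally show "transpose_mat U *\<^sub>v (U *\<^sub>v x) = x" .
  have "U *\<^sub>v (transpose_mat U *\<^sub>v x) = (U * transpose_mat U) *\<^sub>v x" by (rule mv2[OF Uc Ut x, symmetric])
  also have "\<dots> = x" using U x unfolding orth_def by simp
  finally show "U *\<^sub>v (transpose_mat U *\<^sub>v x) = x" .
qed

lemma spectral_step:
  fixes A U :: "real mat"
  assumes A: "A \<in> carrier_mat n n" "transpose_mat A = A" and U: "orth n U" and k: "k < n"
    and inv: "offdiag0 n k (transpose_mat U * A * U)"
  shows "\<exists>U'. orth n U' \<and> offdiag0 n (Suc k) (transpose_mat U' * A * U')"
proof -
  define B where "B = transpose_mat U * A * U"
  have Uc: "U \<in> carrier_mat n n" and UtU: "transpose_mat U * U = 1\<^sub>m n" and UUt: "U * transpose_mat U = 1\<^sub>m n"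
    using U unfolding orth_def by auto
  have Bc: "B \<in> carrier_mat n n" using A Uc unfolding B_def by auto
  have Bsym: "transpose_mat B = B" unfolding B_def by (rule sym_congr[OF A Uc])
  have Bs: "B$$(i,j) = B$$(j,i)" if "i<n" "j<n" for i j using sym_entry[OF Bc Bsym that] .
  have inv0: "\<forall>i<n. \<forall>j<n. i \<noteq> j \<and> (i < k \<or> j < k) \<longrightarrow> B$$(i,j) = 0"
    using inv unfolding offdiag0_def B_def .
  have inv': "B$$(i,j) = 0" if "i<n" "j<n" "i \<noteq> j" "i < k \<or> j < k" for i j
    using inv0[rule_format, OF that(1,2)] that(3,4) by simp
  define m where "m = n - k"
  have nkm: "n = m + k" using k unfolding m_def by simp
  have m0: "m > 0" using k unfolding m_def by simp
  define C where "C = mat m m (\<lambda>(i,j). B$$(i+k, j+k))"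
  have Cc: "C \<in> carrier_mat m m" unfolding C_def by simp
  have Csym: "C $$ (i,j) = C $$ (j,i)" if ij: "i < m" "j < m" for i j
    using Bs[of "i+k" "j+k"] ij nkm by (simp add: C_def)
  have "\<exists>e. eigenvalue C e"
    by (rule real_sym_eig[OF Cc Csym m0])
  then obtain e w where "eigenvector C w e" unfolding eigenvalue_def by blast
  then have w: "w \<in> carrier_vec m" "w \<noteq> 0\<^sub>v m" "C *\<^sub>v w = e \<cdot>\<^sub>v w"
    unfolding eigenvector_def using Cc by auto
  define v where "v = vec n (\<lambda>i. if i < k then 0 else w$(i-k))"
  have vc: "v \<in> carrier_vec n" unfolding v_def by simp
  obtain i0 where i0: "i0 < m" "w $ i0 \<noteq> 0" using vec_nz_entry[OF w(1,2)] by blast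
  have vi0: "v $ (i0 + k) \<noteq> 0" using i0 nkm unfolding v_def by simp
  have Bv: "B *\<^sub>v v = e \<cdot>\<^sub>v v"
  proof (rule eq_vecI)
    fix i assume "i < dim_vec (e \<cdot>\<^sub>v v)"
    then have i: "i < n" using vc by simp
    have "(B *\<^sub>v v)$i = (\<Sum>j\<in>{0..<n}. B$$(i,j) * v$j)"
      using i Bc vc by (simp add: scalar_prod_def)
    also have "\<dots> = (\<Sum>j\<in>{0..<k}. B$$(i,j) * v$j) + (\<Sum>j\<in>{k..<n}. B$$(i,j) * v$j)"
      by (rule sum.atLeastLessThan_concat[symmetric]) (use k in auto)
    also have "(\<Sum>j\<in>{0..<k}. B$$(i,j) * v$j) = 0"
    proof (rule sum.neutral, rule ballI)
      fix j assume "j \<in> {0..<k}"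
      then have "j < k" "j < n" using k by auto
      then show "B$$(i,j) * v$j = 0" by (simp add: v_def)
    qed
    also have "(\<Sum>j\<in>{k..<n}. B$$(i,j) * v$j) = (\<Sum>j\<in>{0..<m}. B$$(i,j+k) * w$j)"
    proof -
      have "(\<Sum>j\<in>{k..<n}. B$$(i,j) * v$j) = (\<Sum>j\<in>{0+k..<m+k}. B$$(i,j) * v$j)" using nkm by simp
      also have "\<dots> = (\<Sum>j\<in>{0..<m}. B$$(i,j+k) * v$(j+k))" by (rule sum.shift_bounds_nat_ivl)
      also have "\<dots> = (\<Sum>j\<in>{0..<m}. B$$(i,j+k) * w$j)"
      proof (rule sum.cong[OF refl])
        fix j assume "j \<in> {0..<m}"
        then have "j + k < n" "\<not> j + k < k" using nkm by auto
        then show "B$$(i,j+k) * v$(j+k) = B$$(i,j+k) * w$j" by (simp add: v_def)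
      qed
      finally show ?thesis .
    qed
    finally have eq: "(B *\<^sub>v v)$i = (\<Sum>j\<in>{0..<m}. B$$(i,j+k) * w$j)" by simp
    show "(B *\<^sub>v v)$i = (e \<cdot>\<^sub>v v)$i"
    proof (cases "i < k")
      case True
      have z: "B$$(i,j+k) * w$j = 0" if j: "j \<in> {0..<m}" for j
      proof -
        have "j + k < n" "i \<noteq> j + k" using j True nkm by auto
        then have "B$$(i,j+k) = 0" using inv'[of i "j+k"] i True by simp
        then show ?thesis by simp
      qed
      have "(\<Sum>j\<in>{0..<m}. B$$(i,j+k) * w$j) = 0"
        by (rule sum.neutral) (use z in blast)
      then show ?thesis using eq True i vc by (simp add: v_def)
    next
      case False
      define i' where "i' = i - k"
      have i': "i' < m" "i = i' + k" using False i nkm unfolding i'_def by auto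
      have "(C *\<^sub>v w) $ i' = (\<Sum>j\<in>{0..<m}. B$$(i,j+k) * w$j)"
        using i' w(1) by (simp add: C_def scalar_prod_def)
      then have "(\<Sum>j\<in>{0..<m}. B$$(i,j+k) * w$j) = e * w $ i'"
        using w(3) i' w(1) by simp
      then show ?thesis using eq False i i' vc by (simp add: v_def)
    qed
  qed (use vc Bc in simp)
  have vv: "v \<bullet> v > 0"
  proof -
    have "v \<bullet> v = (\<Sum>i\<in>{0..<n}. (v $ i)^2)" by (rule self_dot[OF vc])
    also have "\<dots> > 0" by (rule sum_pos2[of _ "i0+k"]) (use vi0 i0 nkm in auto)
    finally show ?thesis .
  qed
  define r where "r = sqrt (v \<bullet> v)"
  have rr: "r * r = v \<bullet> v" unfolding r_def using vv by (simp only: real_sqrt_mult_self abs_of_pos)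
  have r0: "r \<noteq> 0" unfolding r_def using vv by simp
  define u where "u = (1 / r) \<cdot>\<^sub>v v"
  have uc: "u \<in> carrier_vec n" unfolding u_def using vc by simp
  have uu: "u \<bullet> u = 1"
  proof -
    have "u \<bullet> u = (1 / r) * ((1 / r) * (v \<bullet> v))"
      unfolding u_def using vc
      by (simp only: smult_scalar_prod_distrib[of v n] scalar_prod_smult_distrib[of v n] smult_carrier_vec)
    also have "\<dots> = (1 / r) * ((1 / r) * (r * r))" by (simp only: rr)
    also have "\<dots> = 1" using r0 by simp
    finally show ?thesis .
  qed
  have u_low: "u $ i = 0" if "i < k" for i using that k unfolding u_def v_def by simp
  have Bu: "B *\<^sub>v u = e \<cdot>\<^sub>v u"
  proof -
    have "B *\<^sub>v u = (1/r) \<cdot>\<^sub>v (B *\<^sub>v v)" unfolding u_def by (rule mult_mat_vec[OF Bc vc])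
    also have "\<dots> = (1/r) \<cdot>\<^sub>v (e \<cdot>\<^sub>v v)" by (simp only: Bv)
    also have "\<dots> = e \<cdot>\<^sub>v ((1/r) \<cdot>\<^sub>v v)" by (simp only: smult_smult_assoc mult.commute)
    finally show ?thesis unfolding u_def .
  qed
  define w2 where "w2 = u - unit_vec n k"
  have w2c: "w2 \<in> carrier_vec n" unfolding w2_def using uc by simp
  have w2i: "w2 $ i = u $ i - (if i = k then 1 else 0)" if "i < n" for i
    using that uc k unfolding w2_def by simp
  have w2e: "w2 \<bullet> unit_vec n j = w2 $ j" if "j < n" for j using that w2c by simp
  have w2ek: "w2 \<bullet> unit_vec n k = u $ k - 1" using w2e[OF k] w2i[OF k] by simp
  have w2u: "w2 \<bullet> u = 1 - u $ k"
    unfolding w2_def using uc k uu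
    by (simp add: minus_scalar_prod_distrib[of u n])
  have w2w2: "w2 \<bullet> w2 = 2 - 2 * u $ k"
  proof -
    have "w2 \<bullet> w2 = w2 \<bullet> u - w2 \<bullet> unit_vec n k"
      using scalar_prod_minus_distrib[OF w2c uc, of "unit_vec n k"] unfolding w2_def[symmetric] by simp
    then show ?thesis using w2u w2ek by simp
  qed
  define H where "H = hh n w2"
  have Hc: "H \<in> carrier_mat n n" unfolding H_def by simp
  have HH: "H * H = 1\<^sub>m n" unfolding H_def by (rule hh_invol[OF w2c])
  have Ht: "transpose_mat H = H" unfolding H_def by (rule hh_symm)
  have He_low: "H *\<^sub>v unit_vec n j = unit_vec n j" if "j < k" for j
  proof -
    have jn: "j < n" "j \<noteq> k" using that k by auto
    have "w2 \<bullet> unit_vec n j = 0" using w2e[OF jn(1)] w2i[OF jn(1)] u_low[OF that] jn(2) by simp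
    then show ?thesis unfolding H_def by (rule hh_fix[OF w2c unit_vec_carrier])
  qed
  have Hek_Hu: "H *\<^sub>v unit_vec n k = u \<and> H *\<^sub>v u = unit_vec n k"
  proof (cases "w2 \<bullet> w2 = 0")
    case True
    have "w2 = 0\<^sub>v n"
    proof -
      have "(\<Sum>i\<in>{0..<n}. (w2 $ i)^2) = 0" using True self_dot[OF w2c] by simp
      then have "\<forall>i\<in>{0..<n}. (w2 $ i)^2 = 0" by (subst (asm) sum_nonneg_eq_0_iff) auto
      then show ?thesis using w2c by (intro eq_vecI) auto
    qed
    have "u $ i = unit_vec n k $ i" if "i < n" for i
      using w2i[OF that] \<open>w2 = 0\<^sub>v n\<close> that k by simp
    then have ue: "u = unit_vec n k"
      using uc by (intro eq_vecI) auto
    have w0: "w2 \<bullet> unit_vec n k = 0" using w2e[OF k] \<open>w2 = 0\<^sub>v n\<close> k by simp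
    have "H *\<^sub>v unit_vec n k = unit_vec n k"
      unfolding H_def by (rule hh_fix[OF w2c _ w0]) simp
    then show ?thesis using ue by simp
  next
    case False
    have c: "2 - 2 * u $ k \<noteq> 0" using False w2w2 by simp
    have t1: "2 / (w2 \<bullet> w2) * (w2 \<bullet> unit_vec n k) = -1"
      unfolding w2ek w2w2 by (rule div_help[OF c]) simp
    have t2: "2 / (w2 \<bullet> w2) * (w2 \<bullet> u) = 1"
      unfolding w2u w2w2 by (rule div_help[OF c]) simp
    have 1: "H *\<^sub>v unit_vec n k = u"
    proof (rule eq_vecI)
      fix i assume "i < dim_vec u" then have i: "i < n" using uc by simp
      have "(H *\<^sub>v unit_vec n k) $ i = unit_vec n k $ i - 2 / (w2 \<bullet> w2) * (w2 \<bullet> unit_vec n k) * w2 $ i"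
        unfolding H_def by (rule hh_comp[OF w2c _ i]) simp
      also have "\<dots> = unit_vec n k $ i + w2 $ i" using t1 by simp
      also have "\<dots> = u $ i" using w2i[OF i] i k by simp
      finally show "(H *\<^sub>v unit_vec n k) $ i = u $ i" .
    qed (use uc in \<open>simp add: H_def\<close>)
    have 2: "H *\<^sub>v u = unit_vec n k"
    proof (rule eq_vecI)
      fix i assume "i < dim_vec (unit_vec n k :: real vec)" then have i: "i < n" by simp
      have "(H *\<^sub>v u) $ i = u $ i - 2 / (w2 \<bullet> w2) * (w2 \<bullet> u) * w2 $ i"
        unfolding H_def by (rule hh_comp[OF w2c uc i])
      also have "\<dots> = u $ i - w2 $ i" using t2 by simp
      also have "\<dots> = unit_vec n k $ i" using w2i[OF i] i k by simp
      finally show "(H *\<^sub>v u) $ i = unit_vec n k $ i" .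
    qed (simp add: H_def)
    show ?thesis using 1 2 by simp
  qed
  define U' where "U' = U * H"
  have Utc: "transpose_mat U \<in> carrier_mat n n" using Uc by simp
  have U'c: "U' \<in> carrier_mat n n" unfolding U'_def using Uc Hc by simp
  have U'tc: "transpose_mat U' \<in> carrier_mat n n" using U'c by simp
  have U't: "transpose_mat U' = H * transpose_mat U"
    unfolding U'_def using transpose_mult[OF Uc Hc] Ht by simp
  have U'v: "U' *\<^sub>v x = U *\<^sub>v (H *\<^sub>v x)" if "x \<in> carrier_vec n" for x
    unfolding U'_def by (rule mv2[OF Uc Hc that])
  have U'tv: "transpose_mat U' *\<^sub>v x = H *\<^sub>v (transpose_mat U *\<^sub>v x)" if "x \<in> carrier_vec n" for x
    unfolding U't by (rule mv2[OF Hc Utc that])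
  have HHv: "H *\<^sub>v (H *\<^sub>v x) = x" if "x \<in> carrier_vec n" for x
    unfolding H_def by (rule hh_invol_vec[OF w2c that])
  have orth': "orth n U'"
  proof -
    have 1: "transpose_mat U' * U' = 1\<^sub>m n"
    proof (rule mat_eq_vec[of _ n])
      fix x :: "real vec" assume x: "x \<in> carrier_vec n"
      have Hx: "H *\<^sub>v x \<in> carrier_vec n" using Hc x by simp
      have UHx: "U *\<^sub>v (H *\<^sub>v x) \<in> carrier_vec n" using Uc Hx by simp
      have "(transpose_mat U' * U') *\<^sub>v x = transpose_mat U' *\<^sub>v (U' *\<^sub>v x)" by (rule mv2[OF U'tc U'c x])
      also have "\<dots> = transpose_mat U' *\<^sub>v (U *\<^sub>v (H *\<^sub>v x))" by (simp only: U'v[OF x])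
      also have "\<dots> = H *\<^sub>v (transpose_mat U *\<^sub>v (U *\<^sub>v (H *\<^sub>v x)))" by (rule U'tv[OF UHx])
      also have "\<dots> = H *\<^sub>v (H *\<^sub>v x)" by (simp only: orth_vec(1)[OF U Hx])
      also have "\<dots> = x" by (rule HHv[OF x])
      also have "\<dots> = 1\<^sub>m n *\<^sub>v x" using x by simp
      finally show "(transpose_mat U' * U') *\<^sub>v x = 1\<^sub>m n *\<^sub>v x" .
    qed (use U'c U'tc in auto)
    have 2: "U' * transpose_mat U' = 1\<^sub>m n"
    proof (rule mat_eq_vec[of _ n])
      fix x :: "real vec" assume x: "x \<in> carrier_vec n"
      have Utx: "transpose_mat U *\<^sub>v x \<in> carrier_vec n" using Utc x by simp
      have HUtx: "H *\<^sub>v (transpose_mat U *\<^sub>v x) \<in> carrier_vec n" using Hc Utx by simp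
      have "(U' * transpose_mat U') *\<^sub>v x = U' *\<^sub>v (transpose_mat U' *\<^sub>v x)" by (rule mv2[OF U'c U'tc x])
      also have "\<dots> = U' *\<^sub>v (H *\<^sub>v (transpose_mat U *\<^sub>v x))" by (simp only: U'tv[OF x])
      also have "\<dots> = U *\<^sub>v (H *\<^sub>v (H *\<^sub>v (transpose_mat U *\<^sub>v x)))" by (rule U'v[OF HUtx])
      also have "\<dots> = U *\<^sub>v (transpose_mat U *\<^sub>v x)" by (simp only: HHv[OF Utx])
      also have "\<dots> = x" by (rule orth_vec(2)[OF U x])
      also have "\<dots> = 1\<^sub>m n *\<^sub>v x" using x by simp
      finally show "(U' * transpose_mat U') *\<^sub>v x = 1\<^sub>m n *\<^sub>v x" .
    qed (use U'c U'tc in auto)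
    show ?thesis unfolding orth_def using U'c 1 2 by simp
  qed
  define B' where "B' = transpose_mat U' * A * U'"
  have B'c: "B' \<in> carrier_mat n n" unfolding B'_def using U'c A by simp
  have B'sym: "transpose_mat B' = B'" unfolding B'_def by (rule sym_congr[OF A U'c])
  have Bvv: "B *\<^sub>v x = transpose_mat U *\<^sub>v (A *\<^sub>v (U *\<^sub>v x))" if "x \<in> carrier_vec n" for x
    unfolding B_def by (rule mv3[OF Utc A(1) Uc that])
  have B'v: "B' *\<^sub>v x = H *\<^sub>v (B *\<^sub>v (H *\<^sub>v x))" if x: "x \<in> carrier_vec n" for x
  proof -
    have Hx: "H *\<^sub>v x \<in> carrier_vec n" using Hc x by simp
    have UHx: "U *\<^sub>v (H *\<^sub>v x) \<in> carrier_vec n" using Uc Hx by simp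
    have AUHx: "A *\<^sub>v (U *\<^sub>v (H *\<^sub>v x)) \<in> carrier_vec n" using A(1) UHx by simp
    have "B' *\<^sub>v x = transpose_mat U' *\<^sub>v (A *\<^sub>v (U' *\<^sub>v x))"
      unfolding B'_def by (rule mv3[OF U'tc A(1) U'c x])
    also have "\<dots> = transpose_mat U' *\<^sub>v (A *\<^sub>v (U *\<^sub>v (H *\<^sub>v x)))" by (simp only: U'v[OF x])
    also have "\<dots> = H *\<^sub>v (transpose_mat U *\<^sub>v (A *\<^sub>v (U *\<^sub>v (H *\<^sub>v x))))" by (rule U'tv[OF AUHx])
    also have "\<dots> = H *\<^sub>v (B *\<^sub>v (H *\<^sub>v x))" by (simp only: Bvv[OF Hx])
    finally show ?thesis .
  qed
  have col: "\<exists>c. B' *\<^sub>v unit_vec n j = c \<cdot>\<^sub>v unit_vec n j" if "j \<le> k" for j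
  proof (cases "j < k")
    case True
    have "B *\<^sub>v unit_vec n j = B$$(j,j) \<cdot>\<^sub>v unit_vec n j"
    proof (rule eq_vecI)
      fix i assume "i < dim_vec (B$$(j,j) \<cdot>\<^sub>v (unit_vec n j :: real vec))"
      then have i: "i < n" by simp
      have jn: "j < n" using True k by simp
      have "(B *\<^sub>v unit_vec n j) $ i = B $$ (i,j)" by (rule mat_unit[OF Bc jn i])
      also have "\<dots> = (B$$(j,j) \<cdot>\<^sub>v unit_vec n j) $ i"
      proof (cases "i = j")
        case True then show ?thesis using i jn by simp
      next
        case False
        then have "B $$ (i,j) = 0" using inv'[OF i jn False] True by simp
        then show ?thesis using i jn False by simp
      qed
      finally show "(B *\<^sub>v unit_vec n j) $ i = (B$$(j,j) \<cdot>\<^sub>v unit_vec n j) $ i" .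
    qed (use Bc in simp)
    note Bej = this
    have Hej: "H *\<^sub>v unit_vec n j = unit_vec n j" by (rule He_low[OF True])
    have "B' *\<^sub>v unit_vec n j = H *\<^sub>v (B *\<^sub>v (H *\<^sub>v unit_vec n j))" by (rule B'v) simp
    also have "\<dots> = H *\<^sub>v (B$$(j,j) \<cdot>\<^sub>v unit_vec n j)" by (simp only: Hej Bej)
    also have "\<dots> = B$$(j,j) \<cdot>\<^sub>v (H *\<^sub>v unit_vec n j)" by (rule mult_mat_vec[OF Hc]) simp
    also have "\<dots> = B$$(j,j) \<cdot>\<^sub>v unit_vec n j" by (simp only: Hej)
    finally show ?thesis by blast
  next
    case False
    then have jk: "j = k" using that by simp
    have Hek: "H *\<^sub>v unit_vec n k = u" and Hu: "H *\<^sub>v u = unit_vec n k" using Hek_Hu by auto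
    have "B' *\<^sub>v unit_vec n k = H *\<^sub>v (B *\<^sub>v (H *\<^sub>v unit_vec n k))" by (rule B'v) simp
    also have "\<dots> = H *\<^sub>v (e \<cdot>\<^sub>v u)" by (simp only: Hek Bu)
    also have "\<dots> = e \<cdot>\<^sub>v (H *\<^sub>v u)" by (rule mult_mat_vec[OF Hc uc])
    also have "\<dots> = e \<cdot>\<^sub>v unit_vec n k" by (simp only: Hu)
    finally show ?thesis using jk by blast
  qed
  have colz: "B' $$ (i,j) = 0" if ij: "i < n" "j < n" "i \<noteq> j" "j \<le> k" for i j
  proof -
    obtain c where "B' *\<^sub>v unit_vec n j = c \<cdot>\<^sub>v unit_vec n j" using col[OF ij(4)] by blast
    then have "(B' *\<^sub>v unit_vec n j) $ i = 0" using ij by simp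
    then show ?thesis using mat_unit[OF B'c ij(2) ij(1)] by simp
  qed
  have "offdiag0 n (Suc k) B'"
    unfolding offdiag0_def
  proof (intro allI impI)
    fix i j assume ij: "i < n" "j < n" "i \<noteq> j \<and> (i < Suc k \<or> j < Suc k)"
    show "B' $$ (i,j) = 0"
    proof (cases "j < Suc k")
      case True then show ?thesis using colz ij by simp
    next
      case False
      then have "B' $$ (j,i) = 0" using colz ij by simp
      then show ?thesis using sym_entry[OF B'c B'sym ij(1,2)] by simp
    qed
  qed
  then show ?thesis using orth' unfolding B'_def by blast
qed

definition diagm :: "nat \<Rightarrow> real list \<Rightarrow> real mat" where
  "diagm n ds = mat n n (\<lambda>(i,j). if i = j then ds ! i else 0)"

lemma spectral:
  fixes A :: "real mat"
  assumes A: "A \<in> carrier_mat n n" "transpose_mat A = A"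
  shows "\<exists>U ds. orth n U \<and> length ds = n \<and> A = U * diagm n ds * transpose_mat U"
proof -
  have "\<exists>U. orth n U \<and> offdiag0 n k (transpose_mat U * A * U)" if "k \<le> n" for k
    using that
  proof (induction k)
    case 0
    have "orth n (1\<^sub>m n)" unfolding orth_def by simp
    moreover have "offdiag0 n 0 (transpose_mat (1\<^sub>m n) * A * 1\<^sub>m n)" unfolding offdiag0_def by simp
    ultimately show ?case by blast
  next
    case (Suc k)
    then have kn: "k < n" by simp
    then have "k \<le> n" by simp
    from Suc.IH[OF this] obtain U where U: "orth n U" and od: "offdiag0 n k (transpose_mat U * A * U)"
      by blast
    show ?case by (rule spectral_step[OF A U kn od])
  qed
  then obtain U where U: "orth n U" and od: "offdiag0 n n (transpose_mat U * A * U)" by blast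
  define B where "B = transpose_mat U * A * U"
  have Uc: "U \<in> carrier_mat n n" and UUt: "U * transpose_mat U = 1\<^sub>m n"
    using U unfolding orth_def by auto
  have Bc: "B \<in> carrier_mat n n" using A Uc unfolding B_def by auto
  define ds where "ds = map (\<lambda>i. B $$ (i,i)) [0..<n]"
  have od0: "\<forall>i<n. \<forall>j<n. i \<noteq> j \<and> (i < n \<or> j < n) \<longrightarrow> B$$(i,j) = 0"
    using od unfolding offdiag0_def B_def .
  have odB: "\<And>i j. i < n \<Longrightarrow> j < n \<Longrightarrow> i \<noteq> j \<Longrightarrow> B $$ (i,j) = 0"
    using od0 by simp
  have Bd: "B = diagm n ds"
  proof (rule eq_matI)
    fix i j assume "i < dim_row (diagm n ds)" "j < dim_col (diagm n ds)"
    then have ij: "i < n" "j < n" by (auto simp: diagm_def)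
    show "B $$ (i,j) = diagm n ds $$ (i,j)"
      using ij odB[OF ij] by (cases "i = j") (auto simp: diagm_def ds_def)
  qed (use Bc in \<open>auto simp: diagm_def\<close>)
  have Utc: "transpose_mat U \<in> carrier_mat n n" using Uc by simp
  have "U * B * transpose_mat U = A"
  proof (rule mat_eq_vec[of _ n])
    fix x :: "real vec" assume x: "x \<in> carrier_vec n"
    have Utx: "transpose_mat U *\<^sub>v x \<in> carrier_vec n" using Utc x by simp
    have "(U * B * transpose_mat U) *\<^sub>v x = U *\<^sub>v (B *\<^sub>v (transpose_mat U *\<^sub>v x))"
      by (rule mv3[OF Uc Bc Utc x])
    also have "B *\<^sub>v (transpose_mat U *\<^sub>v x) = transpose_mat U *\<^sub>v (A *\<^sub>v (U *\<^sub>v (transpose_mat U *\<^sub>v x)))"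
      unfolding B_def by (rule mv3[OF Utc A(1) Uc Utx])
    also have "U *\<^sub>v (transpose_mat U *\<^sub>v x) = x" by (rule orth_vec(2)[OF U x])
    also have "U *\<^sub>v (transpose_mat U *\<^sub>v (A *\<^sub>v x)) = A *\<^sub>v x"
      by (rule orth_vec(2)[OF U]) (use A x in simp)
    finally show "(U * B * transpose_mat U) *\<^sub>v x = A *\<^sub>v x" .
  qed (use Uc Bc A in auto)
  then have "A = U * diagm n ds * transpose_mat U" using Bd by simp
  moreover have "length ds = n" unfolding ds_def by simp
  ultimately show ?thesis using U by blast
qed



lemma order_prod_linear: "order r (\<Prod>a\<leftarrow>ds. [:-a, 1:]) = count_list ds (r::real)"
proof (induction ds)
  case Nil
  then show ?case by (simp add: order_1)
next
  case (Cons x ds)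
  have nz: "(\<Prod>a\<leftarrow>ds. [:-a, 1:]) \<noteq> (0 :: real poly)"
    by (auto simp: prod_list_zero_iff)
  have nz1: "[:-x, 1:] \<noteq> (0 :: real poly)" by simp
  have nz2: "[:-x, 1:] * (\<Prod>a\<leftarrow>ds. [:-a, 1:]) \<noteq> (0 :: real poly)"
    by (rule no_zero_divisors[OF nz1 nz])
  have "order r (\<Prod>a\<leftarrow>x # ds. [:-a, 1:]) = order r [:-x, 1:] + order r (\<Prod>a\<leftarrow>ds. [:-a, 1:])"
    using order_mult[OF nz2] by simp
  also have "order r [:-x, 1:] = (if x = r then 1 else 0)"
    by (simp add: order_linear')
  finally show ?case using Cons by simp
qed

lemma sum_count_list:
  assumes "finite T"
  shows "(\<Sum>r\<in>T. count_list ds r) = length (filter (\<lambda>x. x \<in> T) ds)"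
proof (induction ds)
  case Nil
  then show ?case by simp
next
  case (Cons a ds)
  have "(\<Sum>r\<in>T. count_list (a # ds) r) = (\<Sum>r\<in>T. count_list ds r + (if a = r then 1 else 0))"
    by (intro sum.cong refl) simp
  also have "\<dots> = (\<Sum>r\<in>T. count_list ds r) + (\<Sum>r\<in>T. (if a = r then 1 else 0))"
    by (rule sum.distrib)
  also have "(\<Sum>r\<in>T. (if a = r then 1 else 0)) = (if a \<in> T then 1 else 0)"
    using assms by (simp add: sum.delta)
  finally show ?case using Cons by simp
qed

lemma count_roots:
  fixes P :: "real \<Rightarrow> bool" and ds :: "real list"
  shows "(\<Sum>r\<in>{r. P r \<and> poly (\<Prod>a\<leftarrow>ds. [:-a, 1:]) r = 0}. order r (\<Prod>a\<leftarrow>ds. [:-a, 1:])) = length (filter P ds)"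
proof -
  have T: "{r. P r \<and> poly (\<Prod>a\<leftarrow>ds. [:-a, 1:]) r = 0} = {r. P r \<and> r \<in> set ds}"
    by (auto simp: poly_prod_list_zero_iff)
  have "(\<Sum>r\<in>{r. P r \<and> poly (\<Prod>a\<leftarrow>ds. [:-a, 1:]) r = 0}. order r (\<Prod>a\<leftarrow>ds. [:-a, 1:]))
      = (\<Sum>r\<in>{r. P r \<and> r \<in> set ds}. count_list ds r)"
    by (simp only: T order_prod_linear)
  also have "\<dots> = length (filter (\<lambda>x. x \<in> {r. P r \<and> r \<in> set ds}) ds)"
    by (rule sum_count_list) simp
  also have "filter (\<lambda>x. x \<in> {r. P r \<and> r \<in> set ds}) ds = filter P ds"
    by (rule filter_cong) auto
  finally show ?thesis .
qed

lemma char_poly_spectral: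
  assumes U: "orth n U" and len: "length ds = n" and Aeq: "A = U * diagm n ds * transpose_mat U"
  shows "char_poly A = (\<Prod>a\<leftarrow>ds. [:-a, 1:])"
proof -
  have Uc: "U \<in> carrier_mat n n" using U unfolding orth_def by auto
  have Dc: "diagm n ds \<in> carrier_mat n n" by (simp add: diagm_def)
  have Ac: "A \<in> carrier_mat n n" using Aeq Uc Dc by simp
  have "similar_mat_wit A (diagm n ds) U (transpose_mat U)"
    unfolding similar_mat_wit_def Let_def using U Ac Dc Aeq Uc unfolding orth_def by auto
  then have sim: "similar_mat A (diagm n ds)" unfolding similar_mat_def by blast
  have ut: "upper_triangular (diagm n ds)" unfolding upper_triangular_def by (simp add: diagm_def)
  have dg: "diag_mat (diagm n ds) = ds"
    unfolding diag_mat_def using len by (intro nth_equalityI) (auto simp: diagm_def)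
  show ?thesis using char_poly_similar[OF sim] char_poly_upper_triangular[OF Dc ut] dg by simp
qed

lemma num_eigs_spectral:
  assumes U: "orth n U" and len: "length ds = n" and Aeq: "A = U * diagm n ds * transpose_mat U"
  shows "num_pos_eig A = length (filter (\<lambda>x. 0 < 1 * x) ds)"
    and "num_neg_eig A = length (filter (\<lambda>x. 0 < (-1) * x) ds)"
proof -
  have cp: "char_poly A = (\<Prod>a\<leftarrow>ds. [:-a, 1:])" by (rule char_poly_spectral[OF U len Aeq])
  show "num_pos_eig A = length (filter (\<lambda>x. 0 < 1 * x) ds)"
    unfolding num_pos_eig_def cp using count_roots[where P="\<lambda>r. r > 0" and ds=ds] by simp
  show "num_neg_eig A = length (filter (\<lambda>x. 0 < (-1) * x) ds)"
    unfolding num_neg_eig_def cp using count_roots[where P="\<lambda>r. r < 0" and ds=ds] by simp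
qed

lemma kernel_exists:
  fixes g :: "nat \<Rightarrow> real vec"
  assumes g: "\<And>r. r < p \<Longrightarrow> g r \<in> carrier_vec k" and pk: "p < k"
  shows "\<exists>y \<in> carrier_vec k. y \<noteq> 0\<^sub>v k \<and> (\<forall>r<p. g r \<bullet> y = 0)"
proof -
  define R where "R = mat k k (\<lambda>(i,j). if i < p then g i $ j else 0)"
  have Rc: "R \<in> carrier_mat k k" unfolding R_def by simp
  have "R = mat\<^sub>r k k (\<lambda>i. if i = k - 1 then 0\<^sub>v k else vec k (\<lambda>j. if i < p then g i $ j else 0))"
    unfolding R_def using pk by (intro eq_matI) auto
  moreover have "det (mat\<^sub>r k k (\<lambda>i. if i = k - 1 then 0\<^sub>v k else vec k (\<lambda>j. if i < p then g i $ j else 0))) = 0"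
    by (rule det_row_0) (use pk in auto)
  ultimately have "det R = 0" by simp
  then obtain y where y: "y \<in> carrier_vec k" "y \<noteq> 0\<^sub>v k" "R *\<^sub>v y = 0\<^sub>v k"
    using det_0_iff_vec_prod_zero_field[OF Rc] by blast
  have "g r \<bullet> y = 0" if r: "r < p" for r
  proof -
    have rk: "r < k" using r pk by simp
    have "(R *\<^sub>v y) $ r = 0" using y(3) rk by simp
    moreover have "(R *\<^sub>v y) $ r = g r \<bullet> y"
      using rk r g[OF r] y(1) unfolding R_def by (simp add: scalar_prod_def)
    ultimately show ?thesis by simp
  qed
  then show ?thesis using y by blast
qed

lemma qf_spectral:
  assumes U: "orth n U" and len: "length ds = n" and Aeq: "A = U * diagm n ds * transpose_mat U"
    and x: "x \<in> carrier_vec n"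
  shows "x \<bullet> (A *\<^sub>v x) = (\<Sum>i\<in>{0..<n}. ds ! i * ((transpose_mat U *\<^sub>v x) $ i)^2)"
proof -
  have Uc: "U \<in> carrier_mat n n" using U unfolding orth_def by auto
  have Utc: "transpose_mat U \<in> carrier_mat n n" using Uc by simp
  have Dc: "diagm n ds \<in> carrier_mat n n" by (simp add: diagm_def)
  define z where "z = transpose_mat U *\<^sub>v x"
  have zc: "z \<in> carrier_vec n" unfolding z_def using Utc x by simp
  have Dz: "diagm n ds *\<^sub>v z \<in> carrier_vec n" using Dc zc by simp
  have "A *\<^sub>v x = U *\<^sub>v (diagm n ds *\<^sub>v z)" unfolding Aeq z_def by (rule mv3[OF Uc Dc Utc x])
  then have "x \<bullet> (A *\<^sub>v x) = x \<bullet> (U *\<^sub>v (diagm n ds *\<^sub>v z))" by simp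
  also have "\<dots> = (transpose_mat U *\<^sub>v x) \<bullet> (diagm n ds *\<^sub>v z)"
    by (rule transpose_vec_mult_scalar[OF Uc Dz x, symmetric])
  also have "\<dots> = z \<bullet> (diagm n ds *\<^sub>v z)" unfolding z_def ..
  also have "\<dots> = (\<Sum>i\<in>{0..<n}. z $ i * (\<Sum>ia\<in>{0..<n}. (if i = ia then ds ! i else 0) * z $ ia))"
    using zc Dc by (simp add: scalar_prod_def diagm_def)
  also have "\<dots> = (\<Sum>i\<in>{0..<n}. z $ i * (ds ! i * z $ i))"
  proof (rule sum.cong[OF refl])
    fix i assume i: "i \<in> {0..<n}"
    have "(\<Sum>ia\<in>{0..<n}. (if i = ia then ds ! i else 0) * z $ ia) = (\<Sum>ia\<in>{0..<n}. (if i = ia then ds ! i * z $ ia else 0))"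
      by (rule sum.cong) auto
    also have "\<dots> = ds ! i * z $ i" using i by (simp add: sum.delta')
    finally show "z $ i * (\<Sum>ia\<in>{0..<n}. (if i = ia then ds ! i else 0) * z $ ia) = z $ i * (ds ! i * z $ i)" by simp
  qed
  also have "\<dots> = (\<Sum>i\<in>{0..<n}. ds ! i * (z $ i)^2)"
    by (intro sum.cong refl) (simp add: power2_eq_square)
  finally show ?thesis unfolding z_def .
qed

lemma len_filter_idx:
  "length (filter P ds) = length (filter (\<lambda>i. P (ds ! i)) [0..<length ds])"
proof -
  have "length (filter P ds) = length (filter P (map (\<lambda>i. ds ! i) [0..<length ds]))"
    by (simp only: map_nth)
  also have "\<dots> = length (map (\<lambda>i. ds ! i) (filter (P \<circ> (\<lambda>i. ds ! i)) [0..<length ds]))"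
    by (simp only: filter_map)
  also have "\<dots> = length (filter (\<lambda>i. P (ds ! i)) [0..<length ds])"
    by (simp add: comp_def)
  finally show ?thesis .
qed

lemma sylv_upper:
  fixes \<sigma> :: real
  assumes U: "orth n U" and len: "length ds = n" and Aeq: "A = U * diagm n ds * transpose_mat U"
    and X: "X \<in> carrier_mat n k"
    and pos: "\<And>y. y \<in> carrier_vec k \<Longrightarrow> y \<noteq> 0\<^sub>v k \<Longrightarrow> \<sigma> * ((X *\<^sub>v y) \<bullet> (A *\<^sub>v (X *\<^sub>v y))) > 0"
  shows "k \<le> length (filter (\<lambda>x. 0 < \<sigma> * x) ds)"
proof (rule ccontr)
  assume nk: "\<not> k \<le> length (filter (\<lambda>x. 0 < \<sigma> * x) ds)"
  define idx where "idx = filter (\<lambda>i. 0 < \<sigma> * ds ! i) [0..<n]"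
  define p where "p = length idx"
  have "p = length (filter (\<lambda>x. 0 < \<sigma> * x) ds)"
    unfolding p_def idx_def using len_filter_idx[of "\<lambda>x. 0 < \<sigma> * x" ds] len by simp
  then have pk: "p < k" using nk by simp
  have Uc: "U \<in> carrier_mat n n" using U unfolding orth_def by auto
  have Utc: "transpose_mat U \<in> carrier_mat n n" using Uc by simp
  define Y where "Y = transpose_mat U * X"
  have Yc: "Y \<in> carrier_mat n k" unfolding Y_def using Utc X by simp
  have idx_lt: "idx ! r < n" if "r < p" for r
  proof -
    have "idx ! r \<in> set idx" using that unfolding p_def by simp
    then show ?thesis unfolding idx_def by simp
  qed
  have gc: "row Y (idx ! r) \<in> carrier_vec k" if "r < p" for r
    by (rule carrier_vecI) (use Yc in simp)
  obtain y where y: "y \<in> carrier_vec k" "y \<noteq> 0\<^sub>v k" "\<forall>r<p. row Y (idx ! r) \<bullet> y = 0"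
    using kernel_exists[of p "\<lambda>r. row Y (idx ! r)" k, OF gc pk] by blast
  define z where "z = Y *\<^sub>v y"
  have z0: "z $ i = 0" if i: "i < n" "0 < \<sigma> * ds ! i" for i
  proof -
    have "i \<in> set idx" using i unfolding idx_def by simp
    then obtain r where r: "r < length idx" "idx ! r = i" by (auto simp: in_set_conv_nth)
    have "z $ i = row Y i \<bullet> y" unfolding z_def using i Yc by simp
    also have "\<dots> = 0" using y(3) r unfolding p_def by auto
    finally show ?thesis .
  qed
  have Xy: "X *\<^sub>v y \<in> carrier_vec n" using X y(1) by simp
  have zz: "transpose_mat U *\<^sub>v (X *\<^sub>v y) = z"
    unfolding z_def Y_def by (rule assoc_mult_mat_vec[of _ n n X k y, symmetric]) (use Utc X y in auto)
  have q: "(X *\<^sub>v y) \<bullet> (A *\<^sub>v (X *\<^sub>v y)) = (\<Sum>i\<in>{0..<n}. ds ! i * (z $ i)^2)"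
    using qf_spectral[OF U len Aeq Xy] zz by simp
  have "\<sigma> * ((X *\<^sub>v y) \<bullet> (A *\<^sub>v (X *\<^sub>v y))) = (\<Sum>i\<in>{0..<n}. \<sigma> * ds ! i * (z $ i)^2)"
    unfolding q sum_distrib_left by (simp add: mult.assoc)
  also have "\<dots> \<le> 0"
  proof (rule sum_nonpos)
    fix i assume "i \<in> {0..<n}"
    then have i: "i < n" by simp
    show "\<sigma> * ds ! i * (z $ i)^2 \<le> 0"
    proof (cases "0 < \<sigma> * ds ! i")
      case True then show ?thesis using z0[OF i True] by simp
    next
      case False
      then have "\<sigma> * ds ! i \<le> 0" by simp
      then show ?thesis by (simp add: mult_nonpos_nonneg)
    qed
  qed
  finally show False using pos[OF y(1,2)] by simp
qed

lemma sylv_lower: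
  fixes \<sigma> :: real
  assumes U: "orth n U" and len: "length ds = n" and Aeq: "A = U * diagm n ds * transpose_mat U"
  shows "\<exists>X. X \<in> carrier_mat n (length (filter (\<lambda>x. 0 < \<sigma> * x) ds)) \<and>
    (\<forall>y. y \<in> carrier_vec (length (filter (\<lambda>x. 0 < \<sigma> * x) ds)) \<longrightarrow>
         y \<noteq> 0\<^sub>v (length (filter (\<lambda>x. 0 < \<sigma> * x) ds)) \<longrightarrow>
         \<sigma> * ((X *\<^sub>v y) \<bullet> (A *\<^sub>v (X *\<^sub>v y))) > 0)"
proof -
  define idx where "idx = filter (\<lambda>i. 0 < \<sigma> * ds ! i) [0..<n]"
  define p where "p = length idx"
  have pp: "length (filter (\<lambda>x. 0 < \<sigma> * x) ds) = p"
    unfolding p_def idx_def using len_filter_idx[of "\<lambda>x. 0 < \<sigma> * x" ds] len by simp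
  have dist: "distinct idx" unfolding idx_def by simp
  have idx_lt: "idx ! r < n" if "r < p" for r
  proof -
    have "idx ! r \<in> set idx" using that unfolding p_def by simp
    then show ?thesis unfolding idx_def by simp
  qed
  have idx_pos: "0 < \<sigma> * ds ! (idx ! r)" if "r < p" for r
  proof -
    have "idx ! r \<in> set idx" using that unfolding p_def by simp
    then show ?thesis unfolding idx_def by simp
  qed
  have Uc: "U \<in> carrier_mat n n" and UtU: "transpose_mat U * U = 1\<^sub>m n" using U unfolding orth_def by auto
  have Utc: "transpose_mat U \<in> carrier_mat n n" using Uc by simp
  define X where "X = mat n p (\<lambda>(i,r). U $$ (i, idx ! r))"
  have Xc: "X \<in> carrier_mat n p" unfolding X_def by simp
  define M where "M = transpose_mat U * X"
  have Mc: "M \<in> carrier_mat n p" unfolding M_def using Utc Xc by simp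
  have Mij: "M $$ (i,r) = (if i = idx ! r then 1 else 0)" if i: "i < n" and r: "r < p" for i r
  proof -
    have colX: "col X r = col U (idx ! r)"
      by (rule eq_vecI) (use Uc r idx_lt[OF r] in \<open>auto simp: X_def\<close>)
    have "M $$ (i,r) = row (transpose_mat U) i \<bullet> col X r"
      unfolding M_def using i r Utc Xc by simp
    also have "\<dots> = row (transpose_mat U) i \<bullet> col U (idx ! r)" by (simp only: colX)
    also have "\<dots> = (transpose_mat U * U) $$ (i, idx ! r)"
      using i idx_lt[OF r] Utc Uc by simp
    also have "\<dots> = (if i = idx ! r then 1 else 0)"
      unfolding UtU using i idx_lt[OF r] by simp
    finally show ?thesis .
  qed
  have "\<sigma> * ((X *\<^sub>v y) \<bullet> (A *\<^sub>v (X *\<^sub>v y))) > 0" if y: "y \<in> carrier_vec p" "y \<noteq> 0\<^sub>v p" for y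
  proof -
    obtain r0 where r0: "r0 < p" "y $ r0 \<noteq> 0" using vec_nz_entry[OF y] by blast
    define z where "z = M *\<^sub>v y"
    have zi: "z $ i = (\<Sum>r\<in>{0..<p}. (if i = idx ! r then y $ r else 0))" if i: "i < n" for i
    proof -
      have "z $ i = (\<Sum>r\<in>{0..<p}. M $$ (i,r) * y $ r)"
        unfolding z_def using i Mc y(1) by (simp add: scalar_prod_def)
      also have "\<dots> = (\<Sum>r\<in>{0..<p}. (if i = idx ! r then y $ r else 0))"
        by (rule sum.cong[OF refl]) (use i Mij in simp)
      finally show ?thesis .
    qed
    have z_out: "z $ i = 0" if i: "i < n" "i \<notin> set idx" for i
    proof -
      have "\<forall>r\<in>{0..<p}. i \<noteq> idx ! r" using i(2) unfolding p_def by auto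
      then show ?thesis using zi[OF i(1)] by simp
    qed
    have z_in: "z $ (idx ! r0) = y $ r0"
    proof -
      have eqv: "(idx ! r0 = idx ! r) = (r0 = r)" if "r \<in> {0..<p}" for r
        using nth_eq_iff_index_eq[OF dist] r0(1) that unfolding p_def by auto
      have "z $ (idx ! r0) = (\<Sum>r\<in>{0..<p}. (if r0 = r then y $ r else 0))"
        using zi[OF idx_lt[OF r0(1)]] eqv by simp
      also have "\<dots> = y $ r0" using r0(1) by simp
      finally show ?thesis .
    qed
    have Xy: "X *\<^sub>v y \<in> carrier_vec n" using Xc y(1) by simp
    have zz: "transpose_mat U *\<^sub>v (X *\<^sub>v y) = z"
      unfolding z_def M_def by (rule assoc_mult_mat_vec[of _ n n X p y, symmetric]) (use Utc Xc y in auto)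
    have q: "(X *\<^sub>v y) \<bullet> (A *\<^sub>v (X *\<^sub>v y)) = (\<Sum>i\<in>{0..<n}. ds ! i * (z $ i)^2)"
      using qf_spectral[OF U len Aeq Xy] zz by simp
    have "\<sigma> * ((X *\<^sub>v y) \<bullet> (A *\<^sub>v (X *\<^sub>v y))) = (\<Sum>i\<in>{0..<n}. \<sigma> * ds ! i * (z $ i)^2)"
      unfolding q sum_distrib_left by (simp add: mult.assoc)
    also have "\<dots> > 0"
    proof (rule sum_pos2[of _ "idx ! r0"])
      show "finite {0..<n}" by simp
      show "idx ! r0 \<in> {0..<n}" using idx_lt[OF r0(1)] by simp
      show "0 < \<sigma> * ds ! (idx ! r0) * (z $ (idx ! r0))^2"
        using idx_pos[OF r0(1)] z_in r0(2) by simp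
      show "0 \<le> \<sigma> * ds ! i * (z $ i)^2" if "i \<in> {0..<n}" for i
      proof -
        from that have i: "i < n" by simp
        show "0 \<le> \<sigma> * ds ! i * (z $ i)^2"
        proof (cases "i \<in> set idx")
          case True
          then have "0 < \<sigma> * ds ! i" unfolding idx_def by simp
          then show ?thesis by simp
        next
          case False
          then show ?thesis using z_out[OF i False] by simp
        qed
      qed
    qed
    finally show ?thesis .
  qed
  then show ?thesis using Xc unfolding pp by blast
qed

lemma sylvester_le:
  fixes A A' P :: "real mat"
  assumes A: "A \<in> carrier_mat n n" "transpose_mat A = A"
    and A': "A' \<in> carrier_mat n n" "transpose_mat A' = A'"
    and P: "P \<in> carrier_mat n n" and eq: "A' = P * A * transpose_mat P"
  shows "num_pos_eig A' \<le> num_pos_eig A \<and> num_neg_eig A' \<le> num_neg_eig A"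
proof -
  obtain U ds where U: "orth n U" "length ds = n" "A = U * diagm n ds * transpose_mat U"
    using spectral[OF A] by blast
  obtain U' ds' where U': "orth n U'" "length ds' = n" "A' = U' * diagm n ds' * transpose_mat U'"
    using spectral[OF A'] by blast
  have Ptc: "transpose_mat P \<in> carrier_mat n n" using P by simp
  have key: "length (filter (\<lambda>x. 0 < \<sigma> * x) ds') \<le> length (filter (\<lambda>x. 0 < \<sigma> * x) ds)" for \<sigma> :: real
  proof -
    let ?p = "length (filter (\<lambda>x. 0 < \<sigma> * x) ds')"
    obtain X' where X': "X' \<in> carrier_mat n ?p"
      and pos': "\<forall>y. y \<in> carrier_vec ?p \<longrightarrow> y \<noteq> 0\<^sub>v ?p \<longrightarrow> \<sigma> * ((X' *\<^sub>v y) \<bullet> (A' *\<^sub>v (X' *\<^sub>v y))) > 0"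
      using sylv_lower[OF U', of \<sigma>] by blast
    define X where "X = transpose_mat P * X'"
    have Xc: "X \<in> carrier_mat n ?p" unfolding X_def using Ptc X' by simp
    show ?thesis
    proof (rule sylv_upper[OF U Xc])
      fix y :: "real vec" assume y: "y \<in> carrier_vec ?p" "y \<noteq> 0\<^sub>v ?p"
      define v where "v = X' *\<^sub>v y"
      have vc: "v \<in> carrier_vec n" unfolding v_def using X' y(1) by simp
      have Xy: "X *\<^sub>v y = transpose_mat P *\<^sub>v v"
        unfolding X_def v_def by (rule assoc_mult_mat_vec[of _ n n X' ?p y]) (use Ptc X' y in auto)
      have Ptv: "transpose_mat P *\<^sub>v v \<in> carrier_vec n" using Ptc vc by simp
      have APtv: "A *\<^sub>v (transpose_mat P *\<^sub>v v) \<in> carrier_vec n" using A(1) Ptv by simp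
      have "(X *\<^sub>v y) \<bullet> (A *\<^sub>v (X *\<^sub>v y)) = (transpose_mat P *\<^sub>v v) \<bullet> (A *\<^sub>v (transpose_mat P *\<^sub>v v))"
        by (simp only: Xy)
      also have "\<dots> = v \<bullet> (P *\<^sub>v (A *\<^sub>v (transpose_mat P *\<^sub>v v)))"
        by (rule transpose_vec_mult_scalar[OF P APtv vc])
      also have "P *\<^sub>v (A *\<^sub>v (transpose_mat P *\<^sub>v v)) = A' *\<^sub>v v"
        unfolding eq by (rule mv3[OF P A(1) Ptc vc, symmetric])
      finally have "(X *\<^sub>v y) \<bullet> (A *\<^sub>v (X *\<^sub>v y)) = v \<bullet> (A' *\<^sub>v v)" .
      then show "\<sigma> * ((X *\<^sub>v y) \<bullet> (A *\<^sub>v (X *\<^sub>v y))) > 0"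
        using pos' y unfolding v_def by simp
    qed
  qed
  show ?thesis
    using key[of 1] key[of "-1"] num_eigs_spectral[OF U] num_eigs_spectral[OF U'] by simp
qed
lemma poly_sum_le:
  fixes p :: "real poly"
  assumes "degree p \<le> N"
  shows "poly p y = (\<Sum>e\<le>N. coeff p e * y ^ e)"
proof -
  have "poly p y = poly (\<Sum>i\<le>N. monom (coeff p i) i) y"
    using poly_as_sum_of_monoms'[OF assms] by simp
  also have "\<dots> = (\<Sum>e\<le>N. coeff p e * y ^ e)"
    by (simp add: poly_sum poly_monom)
  finally show ?thesis .
qed

lemma binform_1: "binform s a 1 y = (\<Sum>j\<le>2*s. (real (2*s choose j) * a j) * y ^ j)"
  unfolding binform_def by (simp add: atLeast0AtMost)

lemma binform_uniq:
  assumes "\<forall>y. binform s a 1 y = binform s a' 1 y" "k \<le> 2*s"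
  shows "a k = a' k"
proof -
  have "\<forall>y. (\<Sum>j\<le>2*s. (real (2*s choose j) * a j) * y ^ j)
          = (\<Sum>j\<le>2*s. (real (2*s choose j) * a' j) * y ^ j)"
    using assms(1) by (simp add: binform_1)
  then have "\<forall>j\<le>2*s. real (2*s choose j) * a j = real (2*s choose j) * a' j"
    by (simp only: polyfun_eq_coeffs)
  then have "real (2*s choose k) * a k = real (2*s choose k) * a' k" using assms(2) by blast
  moreover have "real (2*s choose k) \<noteq> 0" using assms(2) by simp
  ultimately show ?thesis by simp
qed

definition pw :: "nat \<Rightarrow> real \<Rightarrow> real \<Rightarrow> nat \<Rightarrow> real" where
  "pw s c d = (\<lambda>j. c ^ (2*s - j) * d ^ j)"

lemma binform_pw: "binform s (pw s c d) x y = (c * x + d * y) ^ (2*s)"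
proof -
  have "(c * x + d * y) ^ (2*s) = (d*y + c*x) ^ (2*s)" by (simp add: add.commute)
  also have "\<dots> = (\<Sum>k\<le>2*s. real (2*s choose k) * (d*y) ^ k * (c*x) ^ (2*s - k))"
    by (rule binomial_ring)
  also have "\<dots> = binform s (pw s c d) x y"
    unfolding binform_def pw_def atLeast0AtMost
    by (rule sum.cong, simp, simp add: power_mult_distrib)
  finally show ?thesis by simp
qed

definition Rp :: "nat \<Rightarrow> real \<Rightarrow> real \<Rightarrow> real \<Rightarrow> real \<Rightarrow> nat \<Rightarrow> real poly" where
  "Rp s \<alpha> \<beta> \<gamma> \<delta> j = [:\<alpha>,\<beta>:] ^ (2*s - j) * [:\<gamma>,\<delta>:] ^ j"

definition lam :: "nat \<Rightarrow> real \<Rightarrow> real \<Rightarrow> real \<Rightarrow> real \<Rightarrow> nat \<Rightarrow> nat \<Rightarrow> real" where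
  "lam s \<alpha> \<beta> \<gamma> \<delta> k j = real (2*s choose j) * coeff (Rp s \<alpha> \<beta> \<gamma> \<delta> j) k / real (2*s choose k)"

lemma deg_lin_pow: "degree ([:a,b:]^m :: real poly) \<le> m"
proof -
  have "degree ([:a,b:]^m) \<le> degree [:a,b:] * m" by (rule degree_power_le)
  also have "\<dots> \<le> 1 * m" by (intro mult_le_mono1) simp
  finally show ?thesis by simp
qed

lemma degree_Rp: "j \<le> 2*s \<Longrightarrow> degree (Rp s \<alpha> \<beta> \<gamma> \<delta> j) \<le> 2*s"
proof -
  assume j: "j \<le> 2*s"
  have "degree (Rp s \<alpha> \<beta> \<gamma> \<delta> j) \<le> degree ([:\<alpha>,\<beta>:] ^ (2*s - j)) + degree ([:\<gamma>,\<delta>:] ^ j)"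
    unfolding Rp_def by (rule degree_mult_le)
  also have "\<dots> \<le> (2*s - j) + j"
    by (intro add_mono deg_lin_pow)
  finally show ?thesis using j by simp
qed

lemma binform_subst_expand:
  "binform s a (\<alpha> + \<beta> * y) (\<gamma> + \<delta> * y) =
   binform s (\<lambda>k. \<Sum>j\<le>2*s. a j * lam s \<alpha> \<beta> \<gamma> \<delta> k j) 1 y"
proof -
  have "binform s a (\<alpha> + \<beta> * y) (\<gamma> + \<delta> * y)
      = (\<Sum>j\<le>2*s. real (2*s choose j) * a j * poly (Rp s \<alpha> \<beta> \<gamma> \<delta> j) y)"
    unfolding binform_def atLeast0AtMost Rp_def
    by (rule sum.cong, simp, simp add: algebra_simps)
  also have "\<dots> = (\<Sum>j\<le>2*s. real (2*s choose j) * a j * (\<Sum>k\<le>2*s. coeff (Rp s \<alpha> \<beta> \<gamma> \<delta> j) k * y ^ k))"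
    by (rule sum.cong, simp, simp add: poly_sum_le[OF degree_Rp])
  also have "\<dots> = (\<Sum>j\<le>2*s. \<Sum>k\<le>2*s. real (2*s choose j) * a j * coeff (Rp s \<alpha> \<beta> \<gamma> \<delta> j) k * y ^ k)"
    by (simp add: sum_distrib_left mult.assoc)
  also have "\<dots> = (\<Sum>k\<le>2*s. \<Sum>j\<le>2*s. real (2*s choose j) * a j * coeff (Rp s \<alpha> \<beta> \<gamma> \<delta> j) k * y ^ k)"
    by (rule sum.swap)
  also have "\<dots> = (\<Sum>k\<le>2*s. (real (2*s choose k) * (\<Sum>j\<le>2*s. a j * lam s \<alpha> \<beta> \<gamma> \<delta> k j)) * y ^ k)"
  proof (rule sum.cong, simp)
    fix k assume "k \<in> {..2*s}"
    then have nz: "real (2*s choose k) \<noteq> 0" by simp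
    show "(\<Sum>j\<le>2*s. real (2*s choose j) * a j * coeff (Rp s \<alpha> \<beta> \<gamma> \<delta> j) k * y ^ k) =
         real (2*s choose k) * (\<Sum>j\<le>2*s. a j * lam s \<alpha> \<beta> \<gamma> \<delta> k j) * y ^ k"
      unfolding sum_distrib_left sum_distrib_right lam_def
      by (rule sum.cong, simp, insert nz, simp add: field_simps)
  qed
  also have "\<dots> = binform s (\<lambda>k. \<Sum>j\<le>2*s. a j * lam s \<alpha> \<beta> \<gamma> \<delta> k j) 1 y"
    by (simp add: binform_1)
  finally show ?thesis .
qed

lemma coeff_rel:
  assumes "\<forall>x y. binform s b x y = binform s a (\<alpha> * x + \<beta> * y) (\<gamma> * x + \<delta> * y)"
    and "k \<le> 2*s"
  shows "b k = (\<Sum>j\<le>2*s. a j * lam s \<alpha> \<beta> \<gamma> \<delta> k j)"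
proof (rule binform_uniq[OF _ assms(2)], rule allI)
  fix y
  have "binform s b 1 y = binform s a (\<alpha> + \<beta> * y) (\<gamma> + \<delta> * y)"
    using assms(1) by simp
  then show "binform s b 1 y = binform s (\<lambda>k. \<Sum>j\<le>2*s. a j * lam s \<alpha> \<beta> \<gamma> \<delta> k j) 1 y"
    by (simp add: binform_subst_expand)
qed

definition Qp :: "nat \<Rightarrow> real \<Rightarrow> real \<Rightarrow> real \<Rightarrow> real \<Rightarrow> nat \<Rightarrow> real poly" where
  "Qp s \<alpha> \<beta> \<gamma> \<delta> i = [:\<alpha>,\<gamma>:] ^ (s - i) * [:\<beta>,\<delta>:] ^ i"

definition Nm :: "nat \<Rightarrow> real \<Rightarrow> real \<Rightarrow> real \<Rightarrow> real \<Rightarrow> nat \<Rightarrow> nat \<Rightarrow> real" where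
  "Nm s \<alpha> \<beta> \<gamma> \<delta> i m = coeff (Qp s \<alpha> \<beta> \<gamma> \<delta> i) m"

lemma Nm_sum:
  assumes "i \<le> s"
  shows "(\<Sum>m\<le>s. Nm s \<alpha> \<beta> \<gamma> \<delta> i m * d ^ m) = (\<alpha> + d * \<gamma>) ^ (s - i) * (\<beta> + d * \<delta>) ^ i"
proof -
  have "degree (Qp s \<alpha> \<beta> \<gamma> \<delta> i) \<le> degree ([:\<alpha>,\<gamma>:] ^ (s - i)) + degree ([:\<beta>,\<delta>:] ^ i)"
    unfolding Qp_def by (rule degree_mult_le)
  also have "\<dots> \<le> (s - i) + i"
    by (intro add_mono deg_lin_pow)
  finally have deg: "degree (Qp s \<alpha> \<beta> \<gamma> \<delta> i) \<le> s" using assms by simp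
  have "(\<alpha> + d * \<gamma>) ^ (s - i) * (\<beta> + d * \<delta>) ^ i = poly (Qp s \<alpha> \<beta> \<gamma> \<delta> i) d"
    unfolding Qp_def by (simp add: algebra_simps)
  also have "\<dots> = (\<Sum>m\<le>s. Nm s \<alpha> \<beta> \<gamma> \<delta> i m * d ^ m)"
    unfolding Nm_def by (rule poly_sum_le[OF deg])
  finally show ?thesis by simp
qed

lemma pw_test:
  assumes "k \<le> 2*s"
  shows "(\<Sum>j\<le>2*s. d ^ j * lam s \<alpha> \<beta> \<gamma> \<delta> k j) = (\<alpha> + d * \<gamma>) ^ (2*s - k) * (\<beta> + d * \<delta>) ^ k"
proof -
  have "\<forall>x y. binform s (pw s (\<alpha> + d * \<gamma>) (\<beta> + d * \<delta>)) x y
       = binform s (pw s 1 d) (\<alpha> * x + \<beta> * y) (\<gamma> * x + \<delta> * y)"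
    by (simp add: binform_pw algebra_simps)
  from coeff_rel[OF this assms] show ?thesis by (simp add: pw_def)
qed

lemma key_identity:
  assumes "i \<le> s" "l \<le> s"
  shows "(\<Sum>j\<le>2*s. a j * lam s \<alpha> \<beta> \<gamma> \<delta> (i+l) j) =
         (\<Sum>m\<le>s. \<Sum>n\<le>s. Nm s \<alpha> \<beta> \<gamma> \<delta> i m * Nm s \<alpha> \<beta> \<gamma> \<delta> l n * a (m+n))"
proof -
  let ?N = "Nm s \<alpha> \<beta> \<gamma> \<delta>"
  let ?L = "lam s \<alpha> \<beta> \<gamma> \<delta> (i+l)"
  define \<psi> where "\<psi> j = (\<Sum>m\<le>s. \<Sum>n\<le>s. ?N i m * ?N l n * (if m + n = j then 1 else 0))" for j
  have rhs: "(\<Sum>m\<le>s. \<Sum>n\<le>s. ?N i m * ?N l n * f (m+n)) = (\<Sum>j\<le>2*s. f j * \<psi> j)" for f :: "nat \<Rightarrow> real"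
  proof -
    have "(\<Sum>j\<le>2*s. f j * \<psi> j) = (\<Sum>j\<le>2*s. \<Sum>m\<le>s. \<Sum>n\<le>s. ?N i m * ?N l n * (if m + n = j then f j else 0))"
      unfolding \<psi>_def sum_distrib_left by (intro sum.cong refl, simp)
    also have "\<dots> = (\<Sum>m\<le>s. \<Sum>j\<le>2*s. \<Sum>n\<le>s. ?N i m * ?N l n * (if m + n = j then f j else 0))"
      by (rule sum.swap)
    also have "\<dots> = (\<Sum>m\<le>s. \<Sum>n\<le>s. \<Sum>j\<le>2*s. ?N i m * ?N l n * (if m + n = j then f j else 0))"
      by (rule sum.cong[OF refl]) (rule sum.swap)
    also have "\<dots> = (\<Sum>m\<le>s. \<Sum>n\<le>s. ?N i m * ?N l n * f (m+n))"
    proof (intro sum.cong refl)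
      fix m n assume "m \<in> {..s}" "n \<in> {..s}"
      then have "m + n \<in> {..2*s}" by simp
      then show "(\<Sum>j\<le>2*s. ?N i m * ?N l n * (if m + n = j then f j else 0)) = ?N i m * ?N l n * f (m+n)"
        unfolding sum_distrib_left[symmetric] by (simp add: sum.delta)
    qed
    finally show ?thesis by simp
  qed
  have zero: "\<forall>j\<le>2*s. ?L j - \<psi> j = 0"
  proof -
    have "\<forall>d. (\<Sum>j\<le>2*s. (?L j - \<psi> j) * d ^ j) = (\<Sum>j\<le>2*s. 0 * d ^ j)"
    proof
      fix d :: real
      have "(\<Sum>j\<le>2*s. (?L j - \<psi> j) * d ^ j) = (\<Sum>j\<le>2*s. d ^ j * ?L j) - (\<Sum>j\<le>2*s. d ^ j * \<psi> j)"
        by (simp add: sum_subtractf algebra_simps)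
      also have "(\<Sum>j\<le>2*s. d ^ j * ?L j) = (\<alpha> + d * \<gamma>) ^ (2*s - (i+l)) * (\<beta> + d * \<delta>) ^ (i+l)"
        using pw_test[of "i+l" s d] assms by simp
      also have "(\<Sum>j\<le>2*s. d ^ j * \<psi> j) = (\<Sum>m\<le>s. \<Sum>n\<le>s. ?N i m * ?N l n * d ^ (m+n))"
        by (rule rhs[symmetric])
      also have "\<dots> = (\<Sum>m\<le>s. \<Sum>n\<le>s. (?N i m * d ^ m) * (?N l n * d ^ n))"
        by (intro sum.cong refl) (simp add: power_add mult_ac)
      also have "\<dots> = (\<Sum>m\<le>s. ?N i m * d ^ m) * (\<Sum>n\<le>s. ?N l n * d ^ n)"
        by (rule sum_product[symmetric])
      also have "\<dots> = ((\<alpha> + d * \<gamma>) ^ (s - i) * (\<beta> + d * \<delta>) ^ i) * ((\<alpha> + d * \<gamma>) ^ (s - l) * (\<beta> + d * \<delta>) ^ l)"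
        using Nm_sum assms by simp
      also have "\<dots> = (\<alpha> + d * \<gamma>) ^ (2*s - (i+l)) * (\<beta> + d * \<delta>) ^ (i+l)"
      proof -
        have "2*s - (i+l) = (s - i) + (s - l)" using assms by simp
        then show ?thesis by (simp add: power_add algebra_simps)
      qed
      finally show "(\<Sum>j\<le>2*s. (?L j - \<psi> j) * d ^ j) = (\<Sum>j\<le>2*s. 0 * d ^ j)" by simp
    qed
    then show ?thesis by (simp only: polyfun_eq_coeffs)
  qed
  have "(\<Sum>j\<le>2*s. a j * ?L j) = (\<Sum>j\<le>2*s. a j * \<psi> j)"
    using zero by (intro sum.cong refl) simp
  also have "\<dots> = (\<Sum>m\<le>s. \<Sum>n\<le>s. ?N i m * ?N l n * a (m+n))"
    by (rule rhs[symmetric])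
  finally show ?thesis .
qed

definition Nmat :: "nat \<Rightarrow> real \<Rightarrow> real \<Rightarrow> real \<Rightarrow> real \<Rightarrow> real mat" where
  "Nmat s \<alpha> \<beta> \<gamma> \<delta> = mat (s+1) (s+1) (\<lambda>(i,m). Nm s \<alpha> \<beta> \<gamma> \<delta> i m)"

lemma cat_transform:
  assumes "\<forall>x y. binform s b x y = binform s a (\<alpha> * x + \<beta> * y) (\<gamma> * x + \<delta> * y)"
  shows "catalecticant s b = Nmat s \<alpha> \<beta> \<gamma> \<delta> * catalecticant s a * transpose_mat (Nmat s \<alpha> \<beta> \<gamma> \<delta>)"
proof (rule eq_matI)
  let ?N = "Nm s \<alpha> \<beta> \<gamma> \<delta>"
  show "dim_row (catalecticant s b) = dim_row (Nmat s \<alpha> \<beta> \<gamma> \<delta> * catalecticant s a * transpose_mat (Nmat s \<alpha> \<beta> \<gamma> \<delta>))"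
    by (simp add: catalecticant_def Nmat_def)
  show "dim_col (catalecticant s b) = dim_col (Nmat s \<alpha> \<beta> \<gamma> \<delta> * catalecticant s a * transpose_mat (Nmat s \<alpha> \<beta> \<gamma> \<delta>))"
    by (simp add: catalecticant_def Nmat_def)
  fix i l assume i: "i < dim_row (Nmat s \<alpha> \<beta> \<gamma> \<delta> * catalecticant s a * transpose_mat (Nmat s \<alpha> \<beta> \<gamma> \<delta>))"
    and l: "l < dim_col (Nmat s \<alpha> \<beta> \<gamma> \<delta> * catalecticant s a * transpose_mat (Nmat s \<alpha> \<beta> \<gamma> \<delta>))"
  then have i: "i \<le> s" and l: "l \<le> s" by (auto simp: catalecticant_def Nmat_def)
  have "catalecticant s b $$ (i, l) = b (i+l)"
    using i l by (simp add: catalecticant_def)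
  also have "\<dots> = (\<Sum>m\<le>s. \<Sum>n\<le>s. ?N i m * ?N l n * a (m+n))"
    using coeff_rel[OF assms, of "i+l"] key_identity[OF i l] i l by simp
  also have "\<dots> = (\<Sum>n\<le>s. \<Sum>m\<le>s. ?N i m * ?N l n * a (m+n))"
    by (rule sum.swap)
  also have "\<dots> = (\<Sum>n\<le>s. (\<Sum>m\<le>s. ?N i m * a (m+n)) * ?N l n)"
    unfolding sum_distrib_right by (intro sum.cong refl) (simp add: mult_ac)
  also have "\<dots> = (Nmat s \<alpha> \<beta> \<gamma> \<delta> * catalecticant s a * transpose_mat (Nmat s \<alpha> \<beta> \<gamma> \<delta>)) $$ (i, l)"
    using i l
    by (simp add: catalecticant_def Nmat_def scalar_prod_def atLeast0LessThan lessThan_Suc_atMost)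
  finally show "catalecticant s b $$ (i, l) = (Nmat s \<alpha> \<beta> \<gamma> \<delta> * catalecticant s a * transpose_mat (Nmat s \<alpha> \<beta> \<gamma> \<delta>)) $$ (i, l)" .
qed


lemma cat_carrier: "catalecticant s a \<in> carrier_mat (s+1) (s+1)"
  by (simp add: catalecticant_def)

lemma cat_sym: "transpose_mat (catalecticant s a) = catalecticant s a"
  by (rule eq_matI) (auto simp: catalecticant_def add.commute)

lemma Nmat_carrier: "Nmat s \<alpha> \<beta> \<gamma> \<delta> \<in> carrier_mat (s+1) (s+1)"
  by (simp add: Nmat_def)

theorem lemma2p8:
  fixes s :: nat and a b :: "nat \<Rightarrow> real" and \<alpha> \<beta> \<gamma> \<delta> :: real
  assumes "s \<ge> 1"
    and "\<alpha> * \<delta> - \<beta> * \<gamma> \<noteq> 0"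
    and "\<forall>x y. binform s b x y = binform s a (\<alpha> * x + \<beta> * y) (\<gamma> * x + \<delta> * y)"
  shows "signature (catalecticant s b) = signature (catalecticant s a)"
proof -
  define D where "D = \<alpha> * \<delta> - \<beta> * \<gamma>"
  have D0: "D \<noteq> 0" using assms(2) unfolding D_def .
  define \<alpha>' \<beta>' \<gamma>' \<delta>' where "\<alpha>' = \<delta> / D" and "\<beta>' = - \<beta> / D" and "\<gamma>' = - \<gamma> / D" and "\<delta>' = \<alpha> / D"
  have inv: "\<forall>x y. binform s a x y = binform s b (\<alpha>' * x + \<beta>' * y) (\<gamma>' * x + \<delta>' * y)"
  proof (intro allI)
    fix x y :: real
    have e1: "\<alpha> * (\<alpha>' * x + \<beta>' * y) + \<beta> * (\<gamma>' * x + \<delta>' * y) = x"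
    proof -
      have "\<alpha> * (\<alpha>' * x + \<beta>' * y) + \<beta> * (\<gamma>' * x + \<delta>' * y) = ((\<alpha> * \<delta> - \<beta> * \<gamma>) * x) / D"
        unfolding \<alpha>'_def \<beta>'_def \<gamma>'_def \<delta>'_def by (simp add: algebra_simps add_divide_distrib diff_divide_distrib)
      also have "\<dots> = x" using D0 unfolding D_def by simp
      finally show ?thesis .
    qed
    have e2: "\<gamma> * (\<alpha>' * x + \<beta>' * y) + \<delta> * (\<gamma>' * x + \<delta>' * y) = y"
    proof -
      have "\<gamma> * (\<alpha>' * x + \<beta>' * y) + \<delta> * (\<gamma>' * x + \<delta>' * y) = ((\<alpha> * \<delta> - \<beta> * \<gamma>) * y) / D"
        unfolding \<alpha>'_def \<beta>'_def \<gamma>'_def \<delta>'_def by (simp add: algebra_simps add_divide_distrib diff_divide_distrib)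
      also have "\<dots> = y" using D0 unfolding D_def by simp
      finally show ?thesis .
    qed
    have "binform s b (\<alpha>' * x + \<beta>' * y) (\<gamma>' * x + \<delta>' * y)
        = binform s a (\<alpha> * (\<alpha>' * x + \<beta>' * y) + \<beta> * (\<gamma>' * x + \<delta>' * y))
                      (\<gamma> * (\<alpha>' * x + \<beta>' * y) + \<delta> * (\<gamma>' * x + \<delta>' * y))"
      using assms(3) by blast
    also have "\<dots> = binform s a x y" by (simp only: e1 e2)
    finally show "binform s a x y = binform s b (\<alpha>' * x + \<beta>' * y) (\<gamma>' * x + \<delta>' * y)" by simp
  qed
  have t1: "catalecticant s b = Nmat s \<alpha> \<beta> \<gamma> \<delta> * catalecticant s a * transpose_mat (Nmat s \<alpha> \<beta> \<gamma> \<delta>)"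
    by (rule cat_transform[OF assms(3)])
  have t2: "catalecticant s a = Nmat s \<alpha>' \<beta>' \<gamma>' \<delta>' * catalecticant s b * transpose_mat (Nmat s \<alpha>' \<beta>' \<gamma>' \<delta>')"
    by (rule cat_transform[OF inv])
  have le1: "num_pos_eig (catalecticant s b) \<le> num_pos_eig (catalecticant s a) \<and>
             num_neg_eig (catalecticant s b) \<le> num_neg_eig (catalecticant s a)"
    by (rule sylvester_le[OF cat_carrier cat_sym cat_carrier cat_sym Nmat_carrier t1])
  have le2: "num_pos_eig (catalecticant s a) \<le> num_pos_eig (catalecticant s b) \<and>
             num_neg_eig (catalecticant s a) \<le> num_neg_eig (catalecticant s b)"
    by (rule sylvester_le[OF cat_carrier cat_sym cat_carrier cat_sym Nmat_carrier t2])
  show ?thesis unfolding signature_def using le1 le2 by simp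
qed

end
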